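(* Let $M$ be a matroid on a finite set $E$ with $r(M)>0$. For every $B\in\mathcal{B}(M)$, $\cup F_M(B)=\cup\mathcal{B}(M)$.
   Context: For a matroid $M$: $\mathcal{I}(M)$ its independent sets, $\mathcal{B}(M)$ its bases, $r(M)$ the size of a base, $r(X)$ the rank of $X\subseteq E$. For a set family $S$, $\cup S=\bigcup_{X\in S}X$. $s(M)=\{A\in\mathcal{I}(M): |A|=r(M)-1\}$; $K_M(X)=\{a\in E: r(X\cup\{a\})=r(X)+1\}$; $F_M(B)=\{K_M(X): X\in s(M),\ X\subseteq B\}$. *)

theory Defs
  imports Main
begin

definition matroid :: "'a set \<Rightarrow> 'a set set \<Rightarrow> bool" where
  "matroid E \<I> \<longleftrightarrow> finite E \<and> (\<forall>X\<in>\<I>. X \<subseteq> E) \<and> {} \<in> \<I> \<and>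
     (\<forall>X Y. X \<in> \<I> \<and> Y \<subseteq> X \<longrightarrow> Y \<in> \<I>) \<and>
     (\<forall>X Y. X \<in> \<I> \<and> Y \<in> \<I> \<and> card X < card Y \<longrightarrow> (\<exists>e\<in>Y - X. insert e X \<in> \<I>))"

definition bases :: "'a set set \<Rightarrow> 'a set set" where
  "bases \<I> = {B. B \<in> \<I> \<and> (\<forall>X\<in>\<I>. B \<subseteq> X \<longrightarrow> X = B)}"

definition rank_of :: "'a set set \<Rightarrow> 'a set \<Rightarrow> nat" where
  "rank_of \<I> X = Max (card ` {Y. Y \<in> \<I> \<and> Y \<subseteq> X})"

definition mrank :: "'a set \<Rightarrow> 'a set set \<Rightarrow> nat" where
  "mrank E \<I> = rank_of \<I> E"

definition s_sets :: "'a set \<Rightarrow> 'a set set \<Rightarrow> 'a set set" where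
  "s_sets E \<I> = {A. A \<in> \<I> \<and> card A = mrank E \<I> - 1}"

definition K_set :: "'a set \<Rightarrow> 'a set set \<Rightarrow> 'a set \<Rightarrow> 'a set" where
  "K_set E \<I> X = {a\<in>E. rank_of \<I> (insert a X) = rank_of \<I> X + 1}"

definition F_set :: "'a set \<Rightarrow> 'a set set \<Rightarrow> 'a set \<Rightarrow> 'a set set" where
  "F_set E \<I> B = {K_set E \<I> X | X. X \<in> s_sets E \<I> \<and> X \<subseteq> B}"

end

theory Submission
  imports Defs
begin

lemma m_fin: "matroid E I \<Longrightarrow> X \<in> I \<Longrightarrow> finite X \<and> X \<subseteq> E"
  unfolding matroid_def by (meson finite_subset)

lemma m_her: "matroid E I \<Longrightarrow> X \<in> I \<Longrightarrow> Y \<subseteq> X \<Longrightarrow> Y \<in> I"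
  unfolding matroid_def by blast

lemma m_aug: "matroid E I \<Longrightarrow> X \<in> I \<Longrightarrow> Y \<in> I \<Longrightarrow> card X < card Y \<Longrightarrow> \<exists>e\<in>Y - X. insert e X \<in> I"
  unfolding matroid_def by blast

lemma rank_indep:
  assumes m: "matroid E I" and X: "X \<in> I"
  shows "rank_of I X = card X"
proof -
  have fX: "finite X" using m_fin[OF m X] by blast
  have fin: "finite (card ` {Y. Y \<in> I \<and> Y \<subseteq> X})"
    using fX by (intro finite_imageI) (auto intro: finite_subset[of _ "Pow X"])
  have "card X \<in> card ` {Y. Y \<in> I \<and> Y \<subseteq> X}" using X by blast
  moreover have "\<forall>n \<in> card ` {Y. Y \<in> I \<and> Y \<subseteq> X}. n \<le> card X"
    using fX card_mono by blast
  ultimately show ?thesis unfolding rank_of_def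
    using fin by (meson Max_eqI)
qed

lemma rank_insert:
  assumes m: "matroid E I" and X: "X \<in> I"
    and r: "rank_of I (insert a X) = card X + 1"
  shows "a \<notin> X \<and> insert a X \<in> I"
proof -
  have fX: "finite X" using m_fin[OF m X] by blast
  let ?S = "{Y. Y \<in> I \<and> Y \<subseteq> insert a X}"
  have fin: "finite (card ` ?S)"
    using fX by (intro finite_imageI) (auto intro: finite_subset[of _ "Pow (insert a X)"])
  have ne: "card ` ?S \<noteq> {}" using X by blast
  have "Max (card ` ?S) \<in> card ` ?S" using Max_in[OF fin ne] .
  then obtain Y where Y: "Y \<in> I" "Y \<subseteq> insert a X" "card Y = card X + 1"
    using r unfolding rank_of_def by auto
  show ?thesis
  proof (cases "a \<in> X")
    case True
    then have "Y \<subseteq> X" using Y by auto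
    then have "card Y \<le> card X" using fX card_mono by blast
    then show ?thesis using Y by simp
  next
    case False
    then have "card (insert a X) = card Y" using Y fX by simp
    then have "Y = insert a X" using Y fX card_subset_eq[of "insert a X" Y] by simp
    then show ?thesis using Y False by simp
  qed
qed

lemma m_E: "matroid E I \<Longrightarrow> finite E"
  unfolding matroid_def by (elim conjE)

lemma m_sub: "matroid E I \<Longrightarrow> Y \<in> I \<Longrightarrow> Y \<subseteq> E"
  unfolding matroid_def by (elim conjE) (drule bspec, assumption)

lemma m_empty: "matroid E I \<Longrightarrow> {} \<in> I"
  unfolding matroid_def by (elim conjE)

lemma mrank_props:
  assumes m: "matroid E I"
  shows "(\<forall>Y\<in>I. card Y \<le> mrank E I) \<and> (\<exists>Y\<in>I. card Y = mrank E I)"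
proof -
  have fE: "finite E" using m_E[OF m] .
  have eq: "{Y. Y \<in> I \<and> Y \<subseteq> E} = I" using m_sub[OF m] by blast
  have "I \<subseteq> Pow E" using m_sub[OF m] by blast
  then have "finite I" using fE by (meson finite_Pow_iff finite_subset)
  then have fin': "finite (card ` I)" by (rule finite_imageI)
  have ne': "card ` I \<noteq> {}" using m_empty[OF m] by blast
  have mr: "mrank E I = Max (card ` I)" unfolding mrank_def rank_of_def eq ..
  have A: "\<forall>Y\<in>I. card Y \<le> mrank E I"
  proof
    fix Y assume "Y \<in> I"
    then have "card Y \<in> card ` I" by (rule imageI)
    then have "card Y \<le> Max (card ` I)" by (rule Max_ge[OF fin'])
    then show "card Y \<le> mrank E I" unfolding mr .
  qed
  have "Max (card ` I) \<in> card ` I" using Max_in[OF fin' ne'] .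
  then obtain Y0 where "Y0 \<in> I" "Max (card ` I) = card Y0" by (rule imageE)
  then have B: "\<exists>Y\<in>I. card Y = mrank E I" unfolding mr by (intro bexI[of _ Y0]) (rule sym)
  show ?thesis using A B by blast
qed

lemma basis_card:
  assumes m: "matroid E I" and B: "B \<in> bases I"
  shows "card B = mrank E I"
proof -
  obtain Y where Y: "Y \<in> I" "card Y = mrank E I" using mrank_props[OF m] by blast
  have BI: "B \<in> I" and mx: "\<forall>X\<in>I. B \<subseteq> X \<longrightarrow> X = B" using B unfolding bases_def by auto
  have "card B \<le> mrank E I" using mrank_props[OF m] BI by blast
  moreover have "\<not> card B < mrank E I"
  proof
    assume "card B < mrank E I"
    then obtain e where e: "e \<in> Y - B" "insert e B \<in> I" using m_aug[OF m BI Y(1)] Y by auto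
    then show False using mx by auto
  qed
  ultimately show ?thesis by simp
qed

lemma card_basis:
  assumes m: "matroid E I" and Y: "Y \<in> I" "card Y = mrank E I"
  shows "Y \<in> bases I"
proof -
  have "\<forall>X\<in>I. Y \<subseteq> X \<longrightarrow> X = Y"
  proof (intro ballI impI)
    fix X assume X: "X \<in> I" "Y \<subseteq> X"
    have "card X \<le> card Y" using mrank_props[OF m] X Y by auto
    have fX: "finite X" using m_fin[OF m X(1)] by blast
    have "card Y \<le> card X" using fX X(2) by (rule card_mono)
    then have "card Y = card X" using \<open>card X \<le> card Y\<close> by simp
    then show "X = Y" using card_subset_eq[OF fX X(2)] by simp
  qed
  then show ?thesis using Y unfolding bases_def by blast
qed

theorem proposition4:
  fixes E :: "'a set" and \<I> :: "'a set set" and B :: "'a set"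
  assumes "matroid E \<I>"
    and "mrank E \<I> > 0"
    and "B \<in> bases \<I>"
  shows "\<Union> (F_set E \<I> B) = \<Union> (bases \<I>)"
proof
  note m = assms(1)
  show "\<Union> (F_set E \<I> B) \<subseteq> \<Union> (bases \<I>)"
  proof
    fix x assume "x \<in> \<Union> (F_set E \<I> B)"
    then obtain X where X: "X \<in> \<I>" "card X = mrank E \<I> - 1" "x \<in> K_set E \<I> X"
      unfolding F_set_def s_sets_def by auto
    then have "rank_of \<I> (insert x X) = card X + 1"
      unfolding K_set_def using rank_indep[OF m X(1)] by auto
    then have "x \<notin> X \<and> insert x X \<in> \<I>" using rank_insert[OF m X(1)] by blast
    moreover have "finite X" using m_fin[OF m X(1)] by blast
    ultimately have "insert x X \<in> bases \<I>"
      using card_basis[OF m] X assms(2) by auto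
    then show "x \<in> \<Union> (bases \<I>)" by blast
  qed
  show "\<Union> (bases \<I>) \<subseteq> \<Union> (F_set E \<I> B)"
  proof
    fix x assume "x \<in> \<Union> (bases \<I>)"
    then obtain B' where B': "B' \<in> bases \<I>" "x \<in> B'" by blast
    have B'I: "B' \<in> \<I>" using B'(1) unfolding bases_def by simp
    have xI: "{x} \<in> \<I>" using m_her[OF m B'I] B'(2) by simp
    have BI: "B \<in> \<I>" using assms(3) unfolding bases_def by simp
    have fB: "finite B" using m_fin[OF m BI] by blast
    define S where "S = {Y. Y \<in> \<I> \<and> x \<in> Y \<and> Y \<subseteq> insert x B}"
    have "S \<subseteq> Pow (insert x B)" unfolding S_def by blast
    then have "finite S" using fB by (meson finite_Pow_iff finite_insert finite_subset)
    then have fin: "finite (card ` S)" by (rule finite_imageI)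
    have xS: "{x} \<in> S" unfolding S_def using xI by blast
    have ne: "card ` S \<noteq> {}" using xS by blast
    have "Max (card ` S) \<in> card ` S" using Max_in[OF fin ne] .
    then obtain Y where Y: "Y \<in> S" "Max (card ` S) = card Y" by (rule imageE)
    have mxY: "\<forall>Z\<in>S. card Z \<le> card Y"
    proof
      fix Z assume "Z \<in> S"
      then have "card Z \<in> card ` S" by (rule imageI)
      then have "card Z \<le> Max (card ` S)" by (rule Max_ge[OF fin])
      then show "card Z \<le> card Y" unfolding Y(2) .
    qed
    have Yd: "Y \<in> \<I>" "x \<in> Y" "Y \<subseteq> insert x B" using Y(1) unfolding S_def by blast+
    have YI: "Y \<in> \<I>" using Yd by blast
    have cB: "card B = mrank E \<I>" using basis_card[OF m assms(3)] .
    have cY: "card Y = mrank E \<I>"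
    proof -
      have "card Y \<le> mrank E \<I>" using mrank_props[OF m] YI by blast
      moreover have "\<not> card Y < card B"
      proof
        assume "card Y < card B"
        then obtain e where e: "e \<in> B - Y" "insert e Y \<in> \<I>" using m_aug[OF m YI BI] by auto
        then have "insert e Y \<in> S" unfolding S_def using Yd by blast
        then have "card (insert e Y) \<le> card Y" using mxY by blast
        moreover have "finite Y" using m_fin[OF m YI] by blast
        ultimately show False using e by simp
      qed
      ultimately show ?thesis using cB by simp
    qed
    define X where "X = Y - {x}"
    have fY: "finite Y" using m_fin[OF m YI] by blast
    have XI: "X \<in> \<I>" using m_her[OF m YI] X_def by blast
    have xY: "x \<in> Y" using Yd by blast
    have cX: "card X = mrank E \<I> - 1" using X_def cY fY xY by simp
    have XB: "X \<subseteq> B" using Yd X_def by blast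
    have xE: "x \<in> E" using m_fin[OF m YI] xY by blast
    have "insert x X = Y" using X_def xY by blast
    then have "rank_of \<I> (insert x X) = rank_of \<I> X + 1"
      using rank_indep[OF m YI] rank_indep[OF m XI] cX cY assms(2) by simp
    then have "x \<in> K_set E \<I> X" unfolding K_set_def using xE by blast
    moreover have "K_set E \<I> X \<in> F_set E \<I> B"
      unfolding F_set_def s_sets_def using XI cX XB by blast
    ultimately show "x \<in> \<Union> (F_set E \<I> B)" by blast
  qed
qed

end
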